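(* Let $f,g$ be complex-valued functions of two variables with $f\perp g$, let $\{a_i\}_{i\ge0},\{b_i\}_{i\ge0}$ be sequences, $x$ a complex number, and $m\ge 0$ an integer, such that $f(a_0,b_0)\ne0$ and $g(b_j,b_0)\neq0$, $f(a_j,x)\ne0$ for $1\le j\le m$. Then $$\sum_{k=0}^{m}\frac{f(a_k,b_k)}{f(a_0,b_0)}\frac{\prod_{j=0}^{k-1}f(a_j,b_0)}{\prod_{j=1}^{k}g(b_j,b_0)}\frac{\prod_{j=0}^{k-1}g(b_j,x)}{\prod_{j=1}^{k}f(a_j,x)}=\frac{\prod_{j=1}^{m}f(a_j,b_0)}{\prod_{j=1}^{m}g(b_j,b_0)}\frac{\prod_{j=1}^{m}g(b_j,x)}{\prod_{j=1}^{m}f(a_j,x)}.$$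
   Context: $f\perp g$ means $g(u,v)f(z,w)-g(u,w)f(z,v)+g(v,w)f(z,u)=0$ for all $u,v,w,z$. Empty products equal $1$. *)

theory Defs
  imports Complex_Main
begin

definition perp :: "(complex \<Rightarrow> complex \<Rightarrow> complex) \<Rightarrow> (complex \<Rightarrow> complex \<Rightarrow> complex) \<Rightarrow> bool" where
  "perp f g \<longleftrightarrow> (\<forall>u v w z. g u v * f z w - g u w * f z v + g v w * f z u = 0)"

end

theory Submission
  imports Defs
begin

lemma prod_shift0: "(\<Prod>j=0..<Suc m. h j) = h 0 * (\<Prod>j=1..m. h j)" for h :: "nat \<Rightarrow> complex"
  by (induction m) (auto simp: prod.cl_ivl_Suc)

lemma alg:
  fixes A G C F g' fx f00 fab g0x gbx fab0 :: complex
  assumes "G \<noteq> 0" "F \<noteq> 0" "g' \<noteq> 0" "fx \<noteq> 0" "f00 \<noteq> 0"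
    and id: "fab * g0x = gbx * fab0 - g' * fx"
  shows "A / G * (C / F) + fab / f00 * (f00 * A / (G * g')) * (g0x * C / (F * fx))
       = A * fab0 / (G * g') * (C * gbx / (F * fx))"
proof -
  have "A / G * (C / F) + fab / f00 * (f00 * A / (G * g')) * (g0x * C / (F * fx))
      = A * C * (g' * fx + fab * g0x) / (G * g' * F * fx)"
    using assms(1-5) by (simp add: field_simps)
  also have "\<dots> = A * C * (gbx * fab0) / (G * g' * F * fx)" using id by simp
  also have "\<dots> = A * fab0 / (G * g') * (C * gbx / (F * fx))" by (simp add: field_simps)
  finally show ?thesis .
qed

lemma key:
  fixes f g :: "complex \<Rightarrow> complex \<Rightarrow> complex"
    and a b :: "nat \<Rightarrow> complex" and x :: complex and m :: nat
  assumes p: "perp f g"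
    and f0: "f (a 0) (b 0) \<noteq> 0"
    and gn: "\<forall>j. 1 \<le> j \<longrightarrow> j \<le> m \<longrightarrow> g (b j) (b 0) \<noteq> 0"
    and fn: "\<forall>j. 1 \<le> j \<longrightarrow> j \<le> m \<longrightarrow> f (a j) x \<noteq> 0"
  shows "(\<Sum>k=0..m. (f (a k) (b k) / f (a 0) (b 0))
            * ((\<Prod>j=0..<k. f (a j) (b 0)) / (\<Prod>j=1..k. g (b j) (b 0)))
            * ((\<Prod>j=0..<k. g (b j) x) / (\<Prod>j=1..k. f (a j) x)))
         = ((\<Prod>j=1..m. f (a j) (b 0)) / (\<Prod>j=1..m. g (b j) (b 0)))
           * ((\<Prod>j=1..m. g (b j) x) / (\<Prod>j=1..m. f (a j) x))"
  using gn fn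
proof (induction m)
  case 0
  then show ?case using f0 by simp
next
  case (Suc m)
  have IH: "(\<Sum>k=0..m. (f (a k) (b k) / f (a 0) (b 0))
            * ((\<Prod>j=0..<k. f (a j) (b 0)) / (\<Prod>j=1..k. g (b j) (b 0)))
            * ((\<Prod>j=0..<k. g (b j) x) / (\<Prod>j=1..k. f (a j) x)))
         = ((\<Prod>j=1..m. f (a j) (b 0)) / (\<Prod>j=1..m. g (b j) (b 0)))
           * ((\<Prod>j=1..m. g (b j) x) / (\<Prod>j=1..m. f (a j) x))"
    using Suc by auto
  define A where "A = (\<Prod>j=1..m. f (a j) (b 0))"
  define G where "G = (\<Prod>j=1..m. g (b j) (b 0))"
  define C where "C = (\<Prod>j=1..m. g (b j) x)"
  define F where "F = (\<Prod>j=1..m. f (a j) x)"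
  have G0: "G \<noteq> 0" unfolding G_def using Suc.prems by (simp add: prod_zero_iff)
  have F0: "F \<noteq> 0" unfolding F_def using Suc.prems by (simp add: prod_zero_iff)
  have g1: "g (b (Suc m)) (b 0) \<noteq> 0" using Suc.prems by auto
  have f1: "f (a (Suc m)) x \<noteq> 0" using Suc.prems by auto
  have id: "f (a (Suc m)) (b (Suc m)) * g (b 0) x
      = g (b (Suc m)) x * f (a (Suc m)) (b 0) - g (b (Suc m)) (b 0) * f (a (Suc m)) x"
    using p unfolding perp_def
    by (metis (no_types, lifting) add_diff_cancel_left' diff_add_cancel mult.commute
        add.commute eq_neg_iff_add_eq_0 minus_diff_eq)
  have e1: "(\<Prod>j=0..<Suc m. f (a j) (b 0)) = f (a 0) (b 0) * A" unfolding A_def by (rule prod_shift0)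
  have e2: "(\<Prod>j=0..<Suc m. g (b j) x) = g (b 0) x * C" unfolding C_def by (rule prod_shift0)
  have e3: "(\<Prod>j=1..Suc m. f (a j) (b 0)) = A * f (a (Suc m)) (b 0)" unfolding A_def by (simp add: prod.cl_ivl_Suc)
  have e4: "(\<Prod>j=1..Suc m. g (b j) (b 0)) = G * g (b (Suc m)) (b 0)" unfolding G_def by (simp add: prod.cl_ivl_Suc)
  have e5: "(\<Prod>j=1..Suc m. g (b j) x) = C * g (b (Suc m)) x" unfolding C_def by (simp add: prod.cl_ivl_Suc)
  have e6: "(\<Prod>j=1..Suc m. f (a j) x) = F * f (a (Suc m)) x" unfolding F_def by (simp add: prod.cl_ivl_Suc)
  have IH': "(\<Sum>k=0..m. (f (a k) (b k) / f (a 0) (b 0))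
            * ((\<Prod>j=0..<k. f (a j) (b 0)) / (\<Prod>j=1..k. g (b j) (b 0)))
            * ((\<Prod>j=0..<k. g (b j) x) / (\<Prod>j=1..k. f (a j) x))) = A / G * (C / F)"
    using IH unfolding A_def G_def C_def F_def .
  show ?case
    unfolding sum.atLeast0_atMost_Suc IH' e1 e2 e3 e4 e5 e6
    using alg[OF G0 F0 g1 f1 f0 id] .
qed

theorem corollary3p1:
  fixes f g :: "complex \<Rightarrow> complex \<Rightarrow> complex"
    and a b :: "nat \<Rightarrow> complex" and x :: complex and m :: nat
  assumes "perp f g"
    and "f (a 0) (b 0) \<noteq> 0"
    and "\<And>j. 1 \<le> j \<Longrightarrow> j \<le> m \<Longrightarrow> g (b j) (b 0) \<noteq> 0"
    and "\<And>j. 1 \<le> j \<Longrightarrow> j \<le> m \<Longrightarrow> f (a j) x \<noteq> 0"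
  shows "(\<Sum>k=0..m. (f (a k) (b k) / f (a 0) (b 0))
            * ((\<Prod>j=0..<k. f (a j) (b 0)) / (\<Prod>j=1..k. g (b j) (b 0)))
            * ((\<Prod>j=0..<k. g (b j) x) / (\<Prod>j=1..k. f (a j) x)))
         = ((\<Prod>j=1..m. f (a j) (b 0)) / (\<Prod>j=1..m. g (b j) (b 0)))
           * ((\<Prod>j=1..m. g (b j) x) / (\<Prod>j=1..m. f (a j) x))"
  using key[of f g a b m x] assms by blast

end
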